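(* Let $\mathcal{Q}\subset\mathbb{R}^n$ be compact and let $(\mathcal{E},\mathcal{D})$ be a compression code for $\mathcal{Q}$ operating at rate $r$ and distortion $\delta$, with codebook $\mathcal{C}$. Let $\eta>1$, $d=\frac{\eta r}{\log_2\frac1{{\rm e}\delta}}$, and suppose $\frac{\eta}{\log\frac1{{\rm e}\delta}}\le\epsilon'$ for some $\epsilon'>0$. Let $\beta=\sqrt{\log_2(1/({\rm e}\delta))}$. Let $A\in\mathbb{R}^{d\times n}$ have i.i.d. $\mathcal{N}(0,1)$ entries and let ${\bf z}\sim\mathcal{N}(0,\sigma^2I_d)$ be independent of $A$. For ${\bf x}_o\in\mathcal{Q}$ let $\hat{{\bf x}}_o$ be any element of $\arg\min_{{\bf c}\in\mathcal{C}}\|{\bf y}_o-A{\bf c}\|_2^2$ with ${\bf y}_o=A{\bf x}_o+{\bf z}$. Then for every ${\bf x}_o\in\mathcal{Q}$, \[ \|\hat{{\bf x}}_o-{\bf x}_o\|_2\le\frac{1}{({\rm e}\delta)^{(1+\epsilon')/\eta}}\Big(\frac{2\sigma\beta}{\sqrt\eta}+\sqrt{\frac{4\sigma^2\beta^2}{\eta}+2\delta^2+\frac{4\sigma\delta}{\sqrt\eta}}\Big) \] with probability exceeding \[ 1-2{\rm e}^{-\frac{0.15\eta r}{\log_2\frac1{{\rm e}\delta}}}-{\rm e}^{-\frac{r}{\log_2\frac1{{\rm e}\delta}}}-{\rm e}^{-0.3r}-{\rm e}^{-0.3\epsilon' r}. \]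
   Context: A compression code $(\mathcal{E},\mathcal{D})$ for $\mathcal{Q}$ at rate $r$ consists of an encoder $\mathcal{E}:\mathcal{Q}\to\{1,2,\dots,2^r\}$ and a decoder $\mathcal{D}:\{1,\dots,2^r\}\to\mathbb{R}^n$; its codebook is $\mathcal{C}=\{\mathcal{D}(\mathcal{E}({\bf x})):{\bf x}\in\mathcal{Q}\}$, and its distortion is $\delta=\sup_{{\bf x}\in\mathcal{Q}}\|{\bf x}-\mathcal{D}(\mathcal{E}({\bf x}))\|_2$. $\log$ is the natural logarithm, $\log_2$ the base-2 logarithm. The probability is over $A$ and ${\bf z}$. *)

theory Defs
  imports "HOL-Analysis.Analysis" "HOL-Probability.Probability"
begin

definition codebook :: "('v \<Rightarrow> nat) \<Rightarrow> (nat \<Rightarrow> 'v) \<Rightarrow> 'v set \<Rightarrow> 'v set" where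
  "codebook E D Q = (\<lambda>x. D (E x)) ` Q"

definition distortion :: "('v::real_normed_vector \<Rightarrow> nat) \<Rightarrow> (nat \<Rightarrow> 'v) \<Rightarrow> 'v set \<Rightarrow> real" where
  "distortion E D Q = (SUP x\<in>Q. norm (x - D (E x)))"

definition is_code :: "'v set \<Rightarrow> nat \<Rightarrow> ('v \<Rightarrow> nat) \<Rightarrow> (nat \<Rightarrow> 'v) \<Rightarrow> bool" where
  "is_code Q r E D \<longleftrightarrow> E ` Q \<subseteq> {1..2^r}"

definition ls_argmin :: "(real^'n) set \<Rightarrow> real^'n^'d \<Rightarrow> real^'d \<Rightarrow> (real^'n) set" where
  "ls_argmin C A y = {c \<in> C. \<forall>c'\<in>C. (norm (y - A *v c))\<^sup>2 \<le> (norm (y - A *v c'))\<^sup>2}"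

end

theory Submission
  imports Defs
begin



lemma gauss_lin_mgf:
  fixes \<sigma> b :: real assumes "\<sigma> > 0"
  shows "(\<integral>\<^sup>+x. ennreal (normal_density 0 \<sigma> x) * ennreal (exp (b * x)) \<partial>lborel) = ennreal (exp (b\<^sup>2 * \<sigma>\<^sup>2 / 2))"
proof -
  have eq: "normal_density 0 \<sigma> x * exp (b * x) = exp (b\<^sup>2 * \<sigma>\<^sup>2 / 2) * normal_density (b * \<sigma>\<^sup>2) \<sigma> x" for x
    using assms by (simp add: normal_density_def mult_exp_exp field_simps power2_eq_square)
  have "(\<integral>\<^sup>+x. ennreal (normal_density 0 \<sigma> x) * ennreal (exp (b * x)) \<partial>lborel)
     = (\<integral>\<^sup>+x. ennreal (exp (b\<^sup>2 * \<sigma>\<^sup>2 / 2)) * ennreal (normal_density (b * \<sigma>\<^sup>2) \<sigma> x) \<partial>lborel)"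
    by (intro nn_integral_cong) (simp add: ennreal_mult'[symmetric] eq)
  also have "\<dots> = ennreal (exp (b\<^sup>2 * \<sigma>\<^sup>2 / 2)) * (\<integral>\<^sup>+x. ennreal (normal_density (b * \<sigma>\<^sup>2) \<sigma> x) \<partial>lborel)"
    by (rule nn_integral_cmult) simp
  also have "(\<integral>\<^sup>+x. ennreal (normal_density (b * \<sigma>\<^sup>2) \<sigma> x) \<partial>lborel) = 1"
    using integrable_normal_density[OF assms] integral_normal_density[OF assms]
    by (subst nn_integral_eq_integral) auto
  finally show ?thesis by simp
qed

lemma gauss_sq_mgf:
  fixes s c :: real assumes "s > 0" "2 * c * s\<^sup>2 < 1"
  shows "(\<integral>\<^sup>+x. ennreal (normal_density 0 s x) * ennreal (exp (c * x\<^sup>2)) \<partial>lborel) = ennreal (1 / sqrt (1 - 2 * c * s\<^sup>2))"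
proof -
  define k where "k = 1 - 2 * c * s\<^sup>2"
  have k: "k > 0" using assms by (simp add: k_def)
  define s' where "s' = s / sqrt k"
  have s': "s' > 0" using k assms by (simp add: s'_def)
  have eq: "normal_density 0 s x * exp (c * x\<^sup>2) = (1 / sqrt k) * normal_density 0 s' x" for x
  proof -
    have "s'\<^sup>2 = s\<^sup>2 / k" using k by (simp add: s'_def power_divide)
    then have "normal_density 0 s' x = 1 / sqrt (2 * pi * (s\<^sup>2 / k)) * exp (-(x)\<^sup>2/ (2 * (s\<^sup>2 / k)))"
      by (simp add: normal_density_def)
    also have "\<dots> = sqrt k / sqrt (2 * pi * s\<^sup>2) * exp (-(x)\<^sup>2 * k / (2 * s\<^sup>2))"
      using k assms by (simp add: real_sqrt_divide field_simps)
    finally have 1: "normal_density 0 s' x = sqrt k / sqrt (2 * pi * s\<^sup>2) * exp (-(x)\<^sup>2 * k / (2 * s\<^sup>2))" .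
    have 2: "-(x)\<^sup>2 * k / (2 * s\<^sup>2) = -(x)\<^sup>2 / (2 * s\<^sup>2) + c * x\<^sup>2"
      using assms by (simp add: k_def field_simps)
    show ?thesis using k unfolding 1 2
      by (simp add: normal_density_def mult_exp_exp algebra_simps)
  qed
  have "(\<integral>\<^sup>+x. ennreal (normal_density 0 s x) * ennreal (exp (c * x\<^sup>2)) \<partial>lborel)
     = (\<integral>\<^sup>+x. ennreal (1 / sqrt k) * ennreal (normal_density 0 s' x) \<partial>lborel)"
  proof (intro nn_integral_cong)
    fix x
    have "ennreal (normal_density 0 s x) * ennreal (exp (c * x\<^sup>2)) = ennreal (normal_density 0 s x * exp (c * x\<^sup>2))"
      by (rule ennreal_mult[symmetric]) auto
    also have "\<dots> = ennreal (1 / sqrt k) * ennreal (normal_density 0 s' x)"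
      unfolding eq using k by (intro ennreal_mult) auto
    finally show "ennreal (normal_density 0 s x) * ennreal (exp (c * x\<^sup>2)) = ennreal (1 / sqrt k) * ennreal (normal_density 0 s' x)" .
  qed
  also have "\<dots> = ennreal (1 / sqrt k) * (\<integral>\<^sup>+x. ennreal (normal_density 0 s' x) \<partial>lborel)"
    by (rule nn_integral_cmult) simp
  also have "(\<integral>\<^sup>+x. ennreal (normal_density 0 s' x) \<partial>lborel) = 1"
    using integrable_normal_density integral_normal_density
    using integrable_normal_density[OF s'] integral_normal_density[OF s']
    by (subst nn_integral_eq_integral) auto
  finally show ?thesis by (simp add: k_def)
qed



lemma (in prob_space) chernoff_le:
  fixes X :: "'i \<Rightarrow> 'a \<Rightarrow> real"
  assumes I: "finite I" and ind: "indep_vars (\<lambda>_. borel) X I" and l: "l \<ge> 0"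
    and m: "\<And>i. i \<in> I \<Longrightarrow> (\<integral>\<^sup>+\<omega>. ennreal (exp (- l * X i \<omega>)) \<partial>M) = ennreal (m i)"
    and m0: "\<And>i. i \<in> I \<Longrightarrow> m i \<ge> 0"
  shows "measure M {\<omega>\<in>space M. (\<Sum>i\<in>I. X i \<omega>) \<le> \<theta>} \<le> exp (l * \<theta>) * (\<Prod>i\<in>I. m i)"
proof -
  have rv: "\<And>i. i \<in> I \<Longrightarrow> X i \<in> borel_measurable M"
    using ind by (auto simp: indep_vars_def)
  have ind2: "indep_vars (\<lambda>_. borel) (\<lambda>i \<omega>. exp (- l * X i \<omega>)) I"
    by (rule indep_vars_compose2[OF ind]) auto
  have S: "(\<lambda>\<omega>. \<Sum>i\<in>I. X i \<omega>) \<in> borel_measurable M"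
    using rv by (auto intro!: borel_measurable_sum)
  have set: "{\<omega>\<in>space M. (\<Sum>i\<in>I. X i \<omega>) \<le> \<theta>} \<in> sets M"
    using S by measurable
  have "emeasure M {\<omega>\<in>space M. (\<Sum>i\<in>I. X i \<omega>) \<le> \<theta>}
      = (\<integral>\<^sup>+\<omega>. indicator {\<omega>\<in>space M. (\<Sum>i\<in>I. X i \<omega>) \<le> \<theta>} \<omega> \<partial>M)"
    using set by simp
  also have "\<dots> \<le> (\<integral>\<^sup>+\<omega>. ennreal (exp (l * \<theta>)) * ennreal (\<Prod>i\<in>I. exp (- l * X i \<omega>)) \<partial>M)"
  proof (intro nn_integral_mono)
    fix \<omega> assume "\<omega> \<in> space M"
    show "indicator {\<omega>\<in>space M. (\<Sum>i\<in>I. X i \<omega>) \<le> \<theta>} \<omega> \<le> ennreal (exp (l * \<theta>)) * ennreal (\<Prod>i\<in>I. exp (- l * X i \<omega>))"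
    proof (cases "(\<Sum>i\<in>I. X i \<omega>) \<le> \<theta>")
      case True
      have "(\<Prod>i\<in>I. exp (- l * X i \<omega>)) = exp (- l * (\<Sum>i\<in>I. X i \<omega>))"
        using I by (simp add: exp_sum sum_distrib_left)
      then have "exp (l * \<theta>) * (\<Prod>i\<in>I. exp (- l * X i \<omega>)) = exp (l * (\<theta> - (\<Sum>i\<in>I. X i \<omega>)))"
        by (simp add: mult_exp_exp algebra_simps)
      also have "\<dots> \<ge> 1" using True l by simp
      finally have "1 \<le> ennreal (exp (l * \<theta>) * (\<Prod>i\<in>I. exp (- l * X i \<omega>)))"
        by simp
      then show ?thesis using True \<open>\<omega> \<in> space M\<close>
        by (subst ennreal_mult[symmetric]) (auto intro: prod_nonneg)
    qed auto
  qed
  also have "\<dots> = ennreal (exp (l * \<theta>)) * (\<integral>\<^sup>+\<omega>. (\<Prod>i\<in>I. ennreal (exp (- l * X i \<omega>))) \<partial>M)"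
    using rv by (subst nn_integral_cmult[symmetric]) (auto simp: prod_ennreal intro!: nn_integral_cong)
  also have "(\<integral>\<^sup>+\<omega>. (\<Prod>i\<in>I. ennreal (exp (- l * X i \<omega>))) \<partial>M) = (\<Prod>i\<in>I. \<integral>\<^sup>+\<omega>. ennreal (exp (- l * X i \<omega>)) \<partial>M)"
  proof -
    have ind3: "indep_vars (\<lambda>_. borel) (\<lambda>i \<omega>. ennreal (exp (- l * X i \<omega>))) I"
      by (rule indep_vars_compose2[OF ind]) auto
    show ?thesis by (rule indep_vars_nn_integral[OF I ind3]) auto
  qed
  also have "\<dots> = (\<Prod>i\<in>I. ennreal (m i))"
    using m by (auto intro!: prod.cong)
  also have "\<dots> = ennreal (\<Prod>i\<in>I. m i)"
    using m0 by (simp add: prod_ennreal)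
  finally have "emeasure M {\<omega>\<in>space M. (\<Sum>i\<in>I. X i \<omega>) \<le> \<theta>} \<le> ennreal (exp (l * \<theta>) * (\<Prod>i\<in>I. m i))"
    using m0 by (simp add: ennreal_mult prod_nonneg)
  then show ?thesis
    using m0 by (subst (asm) emeasure_eq_measure) (simp add: prod_nonneg)
qed



definition fam :: "('a \<Rightarrow> real^'n^'d) \<Rightarrow> ('a \<Rightarrow> real^'d) \<Rightarrow> ('d \<times> 'n) + 'd \<Rightarrow> 'a \<Rightarrow> real" where
  "fam A z k \<omega> = (case k of Inl (i, j) \<Rightarrow> A \<omega> $ i $ j | Inr i \<Rightarrow> z \<omega> $ i)"

definition row :: "('a \<Rightarrow> real^'n^'d) \<Rightarrow> real^'n \<Rightarrow> 'd \<Rightarrow> 'a \<Rightarrow> real" where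
  "row A w i \<omega> = (\<Sum>j\<in>UNIV. A \<omega> $ i $ j * w $ j)"

locale gsetup = prob_space M for M :: "'a measure" +
  fixes A :: "'a \<Rightarrow> real^'n::finite^'d::finite" and z :: "'a \<Rightarrow> real^'d"
  assumes ind: "indep_vars (\<lambda>_. borel) (fam A z) UNIV"
begin

lemma fam_meas: "fam A z k \<in> borel_measurable M"
  using ind by (auto simp: indep_vars_def)

lemma A_meas[measurable]: "(\<lambda>\<omega>. A \<omega> $ i $ j) \<in> borel_measurable M"
proof -
  have "fam A z (Inl (i,j)) = (\<lambda>\<omega>. A \<omega> $ i $ j)" by (simp add: fam_def fun_eq_iff)
  then show ?thesis using fam_meas[of "Inl (i,j)"] by simp
qed

lemma z_meas[measurable]: "(\<lambda>\<omega>. z \<omega> $ i) \<in> borel_measurable M"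
proof -
  have "fam A z (Inr i) = (\<lambda>\<omega>. z \<omega> $ i)" by (simp add: fam_def fun_eq_iff)
  then show ?thesis using fam_meas[of "Inr i"] by simp
qed

lemma row_meas[measurable]: "row A w i \<in> borel_measurable M"
  unfolding row_def by measurable

lemma grp:
  assumes "disjoint_family_on K L"
    and "\<And>j. j \<in> L \<Longrightarrow> G j \<in> measurable (PiM (K j) (\<lambda>_. borel)) (N j)"
  shows "indep_vars N (\<lambda>j \<omega>. G j (restrict (\<lambda>k. fam A z k \<omega>) (K j))) L"
  using indep_vars_compose2[OF indep_vars_restrict[OF ind, of L K], of G N] assms
  by auto

lemma comp_meas: "k \<in> K \<Longrightarrow> (\<lambda>f. f k) \<in> borel_measurable (PiM K (\<lambda>_. borel))"
  by (rule measurable_component_singleton)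

lemma row_indep:
  assumes F: "\<And>i. case_prod (F i) \<in> borel_measurable (borel \<Otimes>\<^sub>M borel)"
  shows "indep_vars (\<lambda>_. borel) (\<lambda>i \<omega>. F i (row A w i \<omega>) (z \<omega> $ i)) UNIV"
proof -
  define K :: "'d \<Rightarrow> ('d \<times> 'n + 'd) set" where "K i = insert (Inr i) (range (\<lambda>j. Inl (i, j)))" for i :: 'd
  define G where "G = (\<lambda>i (f :: ('d \<times> 'n) + 'd \<Rightarrow> real). F i (\<Sum>j\<in>UNIV. f (Inl (i, j)) * w $ j) (f (Inr i)))"
  have dj: "disjoint_family_on K UNIV"
    by (auto simp: disjoint_family_on_def K_def)
  have Gm: "G i \<in> borel_measurable (PiM (K i) (\<lambda>_. borel))" for i
  proof -
    have 1: "(\<lambda>f. (\<Sum>j\<in>UNIV. f (Inl (i, j)) * w $ j)) \<in> borel_measurable (PiM (K i) (\<lambda>_. borel))"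
      by (intro borel_measurable_sum borel_measurable_times comp_meas) (auto simp: K_def)
    have 2: "(\<lambda>f. f (Inr i)) \<in> borel_measurable (PiM (K i) (\<lambda>_. borel))"
      by (intro comp_meas) (auto simp: K_def)
    have "(\<lambda>f. case_prod (F i) ((\<Sum>j\<in>UNIV. f (Inl (i, j)) * w $ j), f (Inr i))) \<in> borel_measurable (PiM (K i) (\<lambda>_. borel))"
      by (rule measurable_compose[OF measurable_Pair[OF 1 2] F])
    then show ?thesis by (simp add: G_def)
  qed
  have "indep_vars (\<lambda>_. borel) (\<lambda>j \<omega>. G j (restrict (\<lambda>k. fam A z k \<omega>) (K j))) UNIV"
    by (rule grp[OF dj Gm])
  also have "(\<lambda>j \<omega>. G j (restrict (\<lambda>k. fam A z k \<omega>) (K j))) = (\<lambda>i \<omega>. F i (row A w i \<omega>) (z \<omega> $ i))"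
    by (auto simp: G_def K_def row_def fam_def intro!: ext)
  finally show ?thesis .
qed

lemma row_z_indep: "indep_var lborel (row A w i) lborel (\<lambda>\<omega>. z \<omega> $ i)"
proof -
  define K :: "bool \<Rightarrow> ('d \<times> 'n + 'd) set" where "K b = (if b then range (\<lambda>j. Inl (i, j)) else {Inr i})" for b :: bool
  define G where "G = (\<lambda>b (f :: ('d \<times> 'n) + 'd \<Rightarrow> real). (if b then (\<Sum>j\<in>UNIV. f (Inl (i, j)) * w $ j) else f (Inr i)))"
  have dj: "disjoint_family_on K UNIV"
    by (auto simp: disjoint_family_on_def K_def)
  have Gm: "G b \<in> measurable (PiM (K b) (\<lambda>_. borel)) (case_bool lborel lborel b)" for b
    unfolding G_def K_def by (cases b) (auto intro!: borel_measurable_sum borel_measurable_times comp_meas)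
  have "indep_vars (case_bool lborel lborel) (\<lambda>j \<omega>. G j (restrict (\<lambda>k. fam A z k \<omega>) (K j))) UNIV"
    by (rule grp[OF dj Gm])
  also have "(\<lambda>j \<omega>. G j (restrict (\<lambda>k. fam A z k \<omega>) (K j))) = case_bool (row A w i) (\<lambda>\<omega>. z \<omega> $ i)"
    by (auto simp: G_def K_def row_def fam_def intro!: ext split: bool.split)
  finally show ?thesis unfolding indep_var_def .
qed

end

locale gsetup2 = gsetup M A z for M :: "'a measure" and A :: "'a \<Rightarrow> real^'n::finite^'d::finite" and z :: "'a \<Rightarrow> real^'d" +
  assumes An: "\<And>i j. distributed M lborel (\<lambda>\<omega>. A \<omega> $ i $ j) (\<lambda>x. ennreal (std_normal_density x))"
begin

lemma row_normal:
  assumes w: "w \<noteq> 0"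
  shows "distributed M lborel (row A w i) (\<lambda>x. ennreal (normal_density 0 (norm w) x))"
proof -
  define J where "J = {j. w $ j \<noteq> 0}"
  have J: "finite J" "J \<noteq> {}"
    using w by (auto simp: J_def vec_eq_iff)
  define X where "X = (\<lambda>j \<omega>. w $ j * A \<omega> $ i $ j)"
  have indX: "indep_vars (\<lambda>_. borel) X J"
  proof -
    define K :: "'n \<Rightarrow> ('d \<times> 'n + 'd) set" where "K j = {Inl (i, j)}" for j
    define G where "G = (\<lambda>j (f :: ('d \<times> 'n) + 'd \<Rightarrow> real). w $ j * f (Inl (i, j)))"
    have dj: "disjoint_family_on K J"
      by (auto simp: disjoint_family_on_def K_def)
    have Gm: "G j \<in> borel_measurable (PiM (K j) (\<lambda>_. borel))" for j
      unfolding G_def K_def by (auto intro!: borel_measurable_times comp_meas)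
    have "indep_vars (\<lambda>_. borel) (\<lambda>j \<omega>. G j (restrict (\<lambda>k. fam A z k \<omega>) (K j))) J"
      by (rule grp[OF dj Gm])
    also have "(\<lambda>j \<omega>. G j (restrict (\<lambda>k. fam A z k \<omega>) (K j))) = X"
      by (auto simp: G_def K_def X_def fam_def intro!: ext)
    finally show ?thesis .
  qed
  have nX: "distributed M lborel (X j) (\<lambda>x. ennreal (normal_density 0 \<bar>w $ j\<bar> x))" if "j \<in> J" for j
  proof -
    have "w $ j \<noteq> 0" using that by (simp add: J_def)
    from normal_density_affine[OF An[of i j] _ this, of 0]
    show ?thesis by (simp add: X_def)
  qed
  have "distributed M lborel (\<lambda>x. \<Sum>j\<in>J. X j x) (normal_density (\<Sum>j\<in>J. 0) (sqrt (\<Sum>j\<in>J. (\<bar>w $ j\<bar>)\<^sup>2)))"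
    by (rule sum_indep_normal[OF J indX]) (use nX in \<open>auto simp: J_def\<close>)
  moreover have "(\<lambda>x. \<Sum>j\<in>J. X j x) = row A w i"
  proof
    fix x
    show "(\<Sum>j\<in>J. X j x) = row A w i x"
      unfolding row_def X_def mult.commute[of "w $ _"]
      by (rule sum.mono_neutral_left) (auto simp: J_def)
  qed
  moreover have "sqrt (\<Sum>j\<in>J. (\<bar>w $ j\<bar>)\<^sup>2) = norm w"
  proof -
    have "(\<Sum>j\<in>J. (\<bar>w $ j\<bar>)\<^sup>2) = (\<Sum>j\<in>UNIV. (\<bar>w $ j\<bar>)\<^sup>2)"
      by (rule sum.mono_neutral_left) (auto simp: J_def)
    then show ?thesis by (simp add: norm_vec_def L2_set_def)
  qed
  ultimately show ?thesis by simp
qed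

end

context gsetup2 begin

lemma row_sq_mgf:
  assumes w: "w \<noteq> 0" and c: "2 * c * (norm w)\<^sup>2 < 1"
  shows "(\<integral>\<^sup>+\<omega>. ennreal (exp (c * (row A w i \<omega>)\<^sup>2)) \<partial>M) = ennreal (1 / sqrt (1 - 2 * c * (norm w)\<^sup>2))"
proof -
  have "(\<integral>\<^sup>+\<omega>. ennreal (exp (c * (row A w i \<omega>)\<^sup>2)) \<partial>M)
      = (\<integral>\<^sup>+x. ennreal (normal_density 0 (norm w) x) * ennreal (exp (c * x\<^sup>2)) \<partial>lborel)"
    by (rule distributed_nn_integral[OF row_normal[OF w], symmetric]) simp
  also have "\<dots> = ennreal (1 / sqrt (1 - 2 * c * (norm w)\<^sup>2))"
    by (rule gauss_sq_mgf) (use w c in auto)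
  finally show ?thesis .
qed

end

locale gsetup3 = gsetup2 M A z for M :: "'a measure" and A :: "'a \<Rightarrow> real^'n::finite^'d::finite" and z :: "'a \<Rightarrow> real^'d" +
  fixes \<sigma> :: real
  assumes \<sigma>: "\<sigma> > 0"
    and zn: "\<And>i. distributed M lborel (\<lambda>\<omega>. z \<omega> $ i) (\<lambda>x. ennreal (normal_density 0 \<sigma> x))"
begin

lemma cross_mgf:
  assumes w: "w \<noteq> 0" and bc: "c + b\<^sup>2 * \<sigma>\<^sup>2 / 2 = 0"
  shows "(\<integral>\<^sup>+\<omega>. ennreal (exp (b * row A w i \<omega> * z \<omega> $ i + c * (row A w i \<omega>)\<^sup>2)) \<partial>M) = 1"
proof -
  let ?s = "norm w"
  have s: "?s > 0" using w by simp
  have J: "distributed M (lborel \<Otimes>\<^sub>M lborel) (\<lambda>\<omega>. (row A w i \<omega>, z \<omega> $ i))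
     (\<lambda>(x, y). ennreal (normal_density 0 ?s x) * ennreal (normal_density 0 \<sigma> y))"
    by (rule distributed_joint_indep[OF sigma_finite_lborel sigma_finite_lborel row_normal[OF w] zn row_z_indep])
  define g where "g = (\<lambda>(x::real, y::real). ennreal (exp (b * x * y + c * x\<^sup>2)))"
  have gm: "g \<in> borel_measurable (lborel \<Otimes>\<^sub>M lborel)"
    unfolding g_def by measurable
  have "(\<integral>\<^sup>+\<omega>. ennreal (exp (b * row A w i \<omega> * z \<omega> $ i + c * (row A w i \<omega>)\<^sup>2)) \<partial>M)
     = (\<integral>\<^sup>+\<omega>. g (row A w i \<omega>, z \<omega> $ i) \<partial>M)"
    by (simp add: g_def)
  also have "\<dots> = (\<integral>\<^sup>+p. (case p of (x, y) \<Rightarrow> ennreal (normal_density 0 ?s x) * ennreal (normal_density 0 \<sigma> y)) * g p \<partial>(lborel \<Otimes>\<^sub>M lborel))"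
    by (rule distributed_nn_integral[OF J gm, symmetric])
  also have "\<dots> = (\<integral>\<^sup>+x. \<integral>\<^sup>+y. ennreal (normal_density 0 ?s x) * ennreal (normal_density 0 \<sigma> y) * g (x, y) \<partial>lborel \<partial>lborel)"
  proof -
    have "(\<lambda>p. (case p of (x, y) \<Rightarrow> ennreal (normal_density 0 ?s x) * ennreal (normal_density 0 \<sigma> y)) * g p) \<in> borel_measurable (lborel \<Otimes>\<^sub>M lborel)"
      unfolding g_def by measurable
    then show ?thesis
      by (subst lborel.nn_integral_fst[symmetric]) (auto simp: case_prod_beta)
  qed
  also have "\<dots> = (\<integral>\<^sup>+x. ennreal (normal_density 0 ?s x) \<partial>lborel)"
  proof (intro nn_integral_cong)
    fix x :: real
    have "(\<integral>\<^sup>+y. ennreal (normal_density 0 ?s x) * ennreal (normal_density 0 \<sigma> y) * g (x, y) \<partial>lborel)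
       = (\<integral>\<^sup>+y. ennreal (normal_density 0 ?s x * exp (c * x\<^sup>2)) * (ennreal (normal_density 0 \<sigma> y) * ennreal (exp ((b * x) * y))) \<partial>lborel)"
    proof (intro nn_integral_cong)
      fix y :: real
      have "exp (b * x * y + c * x\<^sup>2) = exp (c * x\<^sup>2) * exp ((b * x) * y)"
        by (simp add: mult_exp_exp algebra_simps)
      then show "ennreal (normal_density 0 ?s x) * ennreal (normal_density 0 \<sigma> y) * g (x, y)
          = ennreal (normal_density 0 ?s x * exp (c * x\<^sup>2)) * (ennreal (normal_density 0 \<sigma> y) * ennreal (exp ((b * x) * y)))"
        by (simp add: g_def ennreal_mult'[symmetric] ennreal_mult[symmetric] mult_ac)
    qed
    also have "\<dots> = ennreal (normal_density 0 ?s x * exp (c * x\<^sup>2)) * (\<integral>\<^sup>+y. ennreal (normal_density 0 \<sigma> y) * ennreal (exp ((b * x) * y)) \<partial>lborel)"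
      by (rule nn_integral_cmult) simp
    also have "(\<integral>\<^sup>+y. ennreal (normal_density 0 \<sigma> y) * ennreal (exp ((b * x) * y)) \<partial>lborel) = ennreal (exp ((b * x)\<^sup>2 * \<sigma>\<^sup>2 / 2))"
      by (rule gauss_lin_mgf[OF \<sigma>])
    also have "ennreal (normal_density 0 ?s x * exp (c * x\<^sup>2)) * ennreal (exp ((b * x)\<^sup>2 * \<sigma>\<^sup>2 / 2))
       = ennreal (normal_density 0 ?s x * exp (c * x\<^sup>2) * exp ((b * x)\<^sup>2 * \<sigma>\<^sup>2 / 2))"
      by (simp add: ennreal_mult[symmetric])
    also have "normal_density 0 ?s x * exp (c * x\<^sup>2) * exp ((b * x)\<^sup>2 * \<sigma>\<^sup>2 / 2) = normal_density 0 ?s x"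
    proof -
      have "c * x\<^sup>2 + (b * x)\<^sup>2 * \<sigma>\<^sup>2 / 2 = (c + b\<^sup>2 * \<sigma>\<^sup>2 / 2) * x\<^sup>2"
        by (simp add: algebra_simps power_mult_distrib)
      then have "exp (c * x\<^sup>2) * exp ((b * x)\<^sup>2 * \<sigma>\<^sup>2 / 2) = 1"
        using bc by (simp add: mult_exp_exp)
      then show ?thesis by (simp add: mult.assoc)
    qed
    finally show "(\<integral>\<^sup>+y. ennreal (normal_density 0 ?s x) * ennreal (normal_density 0 \<sigma> y) * g (x, y) \<partial>lborel)
        = ennreal (normal_density 0 ?s x)" .
  qed
  also have "\<dots> = 1"
    using integrable_normal_density[OF s] integral_normal_density[OF s]
    by (subst nn_integral_eq_integral) auto
  finally show ?thesis .
qed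

end

context gsetup2 begin

lemma tail_up:
  assumes w: "w \<noteq> 0"
  shows "measure M {\<omega>\<in>space M. 2 * real CARD('d) * (norm w)\<^sup>2 \<le> (\<Sum>i\<in>UNIV. (row A w i \<omega>)\<^sup>2)}
           \<le> exp (- real CARD('d) / 2) * sqrt 2 ^ CARD('d)"
proof -
  let ?s = "norm w"
  have s: "?s > 0" using w by simp
  have ind: "indep_vars (\<lambda>_. borel) (\<lambda>i \<omega>. - (row A w i \<omega>)\<^sup>2) UNIV"
    using row_indep[of "\<lambda>i a b. - a\<^sup>2" w] by simp
  have m: "(\<integral>\<^sup>+\<omega>. ennreal (exp (- (1 / (4 * ?s\<^sup>2)) * - (row A w i \<omega>)\<^sup>2)) \<partial>M) = ennreal (sqrt 2)" for i
  proof -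
    have "(\<integral>\<^sup>+\<omega>. ennreal (exp (- (1 / (4 * ?s\<^sup>2)) * - (row A w i \<omega>)\<^sup>2)) \<partial>M)
       = (\<integral>\<^sup>+\<omega>. ennreal (exp ((1 / (4 * ?s\<^sup>2)) * (row A w i \<omega>)\<^sup>2)) \<partial>M)" by simp
    also have "\<dots> = ennreal (1 / sqrt (1 - 2 * (1 / (4 * ?s\<^sup>2)) * ?s\<^sup>2))"
      by (rule row_sq_mgf[OF w]) (use s in simp)
    also have "1 - 2 * (1 / (4 * ?s\<^sup>2)) * ?s\<^sup>2 = 1 / 2" using s by (simp add: field_simps)
    also have "1 / sqrt (1 / 2) = sqrt (2::real)" by (simp add: real_sqrt_divide)
    finally show ?thesis .
  qed
  have eq1: "{\<omega>\<in>space M. (\<Sum>i\<in>UNIV. - (row A w i \<omega>)\<^sup>2) \<le> - 2 * real CARD('d) * ?s\<^sup>2}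
     = {\<omega>\<in>space M. 2 * real CARD('d) * (norm w)\<^sup>2 \<le> (\<Sum>i\<in>UNIV. (row A w i \<omega>)\<^sup>2)}"
    by (auto simp: sum_negf)
  have eq2: "(1 / (4 * ?s\<^sup>2)) * (- 2 * real CARD('d) * ?s\<^sup>2) = - real CARD('d) / 2"
    using s by (simp add: field_simps)
  have "measure M {\<omega>\<in>space M. (\<Sum>i\<in>UNIV. - (row A w i \<omega>)\<^sup>2) \<le> - 2 * real CARD('d) * ?s\<^sup>2}
       \<le> exp ((1 / (4 * ?s\<^sup>2)) * (- 2 * real CARD('d) * ?s\<^sup>2)) * (\<Prod>i\<in>(UNIV::'d set). sqrt 2)"
    by (rule chernoff_le[where I=UNIV and X="\<lambda>i \<omega>. - (row A w i \<omega>)\<^sup>2" and l="1 / (4 * (norm w)\<^sup>2)" and m="\<lambda>_. sqrt 2" and \<theta>="- 2 * real CARD('d) * (norm w)\<^sup>2"]) (use ind m in auto)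
  then show ?thesis unfolding eq1 eq2 by simp
qed

lemma tail_low:
  assumes w: "w \<noteq> 0" and k: "0 < k" "k < 1"
  shows "measure M {\<omega>\<in>space M. (\<Sum>i\<in>UNIV. (row A w i \<omega>)\<^sup>2) \<le> k * real CARD('d) * (norm w)\<^sup>2}
           \<le> exp (real CARD('d) / 2) * sqrt k ^ CARD('d)"
proof -
  let ?s = "norm w"
  have s: "?s > 0" using w by simp
  define l where "l = (1 / k - 1) / (2 * ?s\<^sup>2)"
  have l: "l \<ge> 0" using k s by (simp add: l_def field_simps)
  have ind: "indep_vars (\<lambda>_. borel) (\<lambda>i \<omega>. (row A w i \<omega>)\<^sup>2) UNIV"
    using row_indep[of "\<lambda>i a b. a\<^sup>2" w] by simp
  have m: "(\<integral>\<^sup>+\<omega>. ennreal (exp (- l * (row A w i \<omega>)\<^sup>2)) \<partial>M) = ennreal (sqrt k)" for i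
  proof -
    have "(\<integral>\<^sup>+\<omega>. ennreal (exp (- l * (row A w i \<omega>)\<^sup>2)) \<partial>M) = ennreal (1 / sqrt (1 - 2 * (- l) * ?s\<^sup>2))"
    proof (rule row_sq_mgf[OF w])
      have "0 \<le> 2 * l * ?s\<^sup>2" using l by simp
      then show "2 * - l * ?s\<^sup>2 < 1" by linarith
    qed
    also have "1 - 2 * (- l) * ?s\<^sup>2 = 1 / k" using s k by (simp add: l_def field_simps)
    also have "1 / sqrt (1 / k) = sqrt k" using k by (simp add: real_sqrt_divide)
    finally show ?thesis .
  qed
  have "measure M {\<omega>\<in>space M. (\<Sum>i\<in>UNIV. (row A w i \<omega>)\<^sup>2) \<le> k * real CARD('d) * ?s\<^sup>2}
       \<le> exp (l * (k * real CARD('d) * ?s\<^sup>2)) * (\<Prod>i\<in>(UNIV::'d set). sqrt k)"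
    by (rule chernoff_le[where I=UNIV and X="\<lambda>i \<omega>. (row A w i \<omega>)\<^sup>2" and l="l" and m="\<lambda>_. sqrt k" and \<theta>="k * real CARD('d) * (norm w)\<^sup>2"]) (use ind m l k in auto)
  also have "l * (k * real CARD('d) * ?s\<^sup>2) = (1 - k) * real CARD('d) / 2"
    using s k by (simp add: l_def field_simps)
  also have "exp ((1 - k) * real CARD('d) / 2) \<le> exp (real CARD('d) / 2)"
    using k by (simp add: field_simps)
  then have "exp ((1 - k) * real CARD('d) / 2) * (\<Prod>i\<in>(UNIV::'d set). sqrt k) \<le> exp (real CARD('d) / 2) * sqrt k ^ CARD('d)"
    using k by (simp add: mult_right_mono)
  finally show ?thesis .
qed

end

context gsetup3 begin

lemma tail_cross:
  assumes w: "w \<noteq> 0" and \<mu>: "\<mu> > 0"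
  shows "measure M {\<omega>\<in>space M. (\<Sum>i\<in>UNIV. 2 * row A w i \<omega> * z \<omega> $ i + \<mu> * (row A w i \<omega>)\<^sup>2) \<le> - (\<sigma>\<^sup>2 * \<tau>\<^sup>2 / \<mu>)}
           \<le> exp (- \<tau>\<^sup>2 / 2)"
proof -
  define l where "l = \<mu> / (2 * \<sigma>\<^sup>2)"
  have l: "l \<ge> 0" using \<mu> \<sigma> by (simp add: l_def)
  have ind: "indep_vars (\<lambda>_. borel) (\<lambda>i \<omega>. 2 * row A w i \<omega> * z \<omega> $ i + \<mu> * (row A w i \<omega>)\<^sup>2) UNIV"
    using row_indep[of "\<lambda>i a b. 2 * a * b + \<mu> * a\<^sup>2" w] by simp
  have m: "(\<integral>\<^sup>+\<omega>. ennreal (exp (- l * (2 * row A w i \<omega> * z \<omega> $ i + \<mu> * (row A w i \<omega>)\<^sup>2))) \<partial>M) = ennreal 1" for i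
  proof -
    have "(\<integral>\<^sup>+\<omega>. ennreal (exp (- l * (2 * row A w i \<omega> * z \<omega> $ i + \<mu> * (row A w i \<omega>)\<^sup>2))) \<partial>M)
      = (\<integral>\<^sup>+\<omega>. ennreal (exp ((-2 * l) * row A w i \<omega> * z \<omega> $ i + (- l * \<mu>) * (row A w i \<omega>)\<^sup>2)) \<partial>M)"
      by (simp add: algebra_simps)
    also have "\<dots> = 1"
      by (rule cross_mgf[OF w]) (use \<sigma> in \<open>simp add: l_def field_simps power2_eq_square\<close>)
    finally show ?thesis by simp
  qed
  have "measure M {\<omega>\<in>space M. (\<Sum>i\<in>UNIV. 2 * row A w i \<omega> * z \<omega> $ i + \<mu> * (row A w i \<omega>)\<^sup>2) \<le> - (\<sigma>\<^sup>2 * \<tau>\<^sup>2 / \<mu>)}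
      \<le> exp (l * - (\<sigma>\<^sup>2 * \<tau>\<^sup>2 / \<mu>)) * (\<Prod>i\<in>(UNIV::'d set). 1)"
    by (rule chernoff_le[where I=UNIV and X="\<lambda>i \<omega>. 2 * row A w i \<omega> * z \<omega> $ i + \<mu> * (row A w i \<omega>)\<^sup>2" and l="l" and m="\<lambda>_. 1" and \<theta>="- (\<sigma>\<^sup>2 * \<tau>\<^sup>2 / \<mu>)"]) (use ind m l in auto)
  also have "l * - (\<sigma>\<^sup>2 * \<tau>\<^sup>2 / \<mu>) = - \<tau>\<^sup>2 / 2"
    using \<mu> \<sigma> by (simp add: l_def field_simps power2_eq_square)
  finally show ?thesis by simp
qed

end


lemma ln2_le: "ln 2 \<le> (0.7::real)"
proof -
  have "(1.105::real) \<le> exp 0.1"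
    using exp_lower_Taylor_quadratic[of "0.1::real"] by (simp add: power2_eq_square)
  then have "(1.105::real) ^ 7 \<le> exp 0.1 ^ 7" by (rule power_mono) simp
  also have "exp (0.1::real) ^ 7 = exp (real 7 * 0.1)" by (simp only: exp_of_nat_mult)
  finally have h: "(1.105::real) ^ 7 \<le> exp 0.7" by simp
  have "(2::real) \<le> 1.105 ^ 7" by (simp add: divide_simps)
  then have "2 \<le> exp (0.7::real)" using h by linarith
  then have "ln 2 \<le> ln (exp (0.7::real))" by (subst ln_le_cancel_iff) auto
  then show ?thesis by simp
qed

lemma ln2_ge: "(0.6::real) \<le> ln 2"
proof -
  have "0.9 \<le> exp (- 0.1::real)" using exp_ge_add_one_self[of "- 0.1::real"] by simp
  then have "exp (0.1::real) \<le> 1 / 0.9"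
    by (simp add: exp_minus field_simps)
  then have "exp (0.1::real) ^ 6 \<le> (1 / 0.9) ^ 6" by (rule power_mono) simp
  also have "exp (0.1::real) ^ 6 = exp (real 6 * 0.1)" by (simp only: exp_of_nat_mult)
  finally have h: "exp (0.6::real) \<le> (1 / 0.9) ^ 6" by simp
  have "(1 / 0.9) ^ 6 \<le> (2::real)" by (simp add: divide_simps)
  then have "exp (0.6::real) \<le> 2" using h by linarith
  then have "ln (exp (0.6::real)) \<le> ln 2" by (subst ln_le_cancel_iff) auto
  then show ?thesis by simp
qed

lemma det_core:
  fixes S S0 C0 Cc \<sigma> \<tau> R x0 :: real
  assumes "0 \<le> \<sigma>" "0 < \<tau>" "0 \<le> R" and x0: "\<sigma> * \<tau> + sqrt (\<sigma>\<^sup>2 * \<tau>\<^sup>2 + R) < x0" "x0\<^sup>2 \<le> S"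
    and cross: "\<sigma> > 0 \<Longrightarrow> - (\<sigma> * \<tau> / x0) * S - \<sigma> * \<tau> * x0 < 2 * Cc"
    and zero: "\<sigma> = 0 \<Longrightarrow> Cc = 0"
    and c0: "S0 + 2 * C0 \<le> R"
  shows "S0 + 2 * C0 < S + 2 * Cc"
proof -
  have nn: "0 \<le> \<sigma>\<^sup>2 * \<tau>\<^sup>2 + R" using \<open>0 \<le> R\<close> by (intro add_nonneg_nonneg mult_nonneg_nonneg) auto
  have sq: "sqrt (\<sigma>\<^sup>2 * \<tau>\<^sup>2 + R) \<ge> 0" using nn by simp
  have st: "\<sigma> * \<tau> \<ge> 0" using assms by simp
  have x0p: "x0 > 0" using x0 sq st by linarith
  have "(x0 - \<sigma> * \<tau>)\<^sup>2 > (sqrt (\<sigma>\<^sup>2 * \<tau>\<^sup>2 + R))\<^sup>2"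
    using x0 sq by (intro power_strict_mono) auto
  moreover have "0 \<le> \<sigma>\<^sup>2 * \<tau>\<^sup>2 + R" using \<open>0 \<le> R\<close> by (intro add_nonneg_nonneg mult_nonneg_nonneg) auto
  then have "(sqrt (\<sigma>\<^sup>2 * \<tau>\<^sup>2 + R))\<^sup>2 = \<sigma>\<^sup>2 * \<tau>\<^sup>2 + R" by (rule real_sqrt_pow2)
  ultimately have key: "(x0 - \<sigma> * \<tau>)\<^sup>2 > \<sigma>\<^sup>2 * \<tau>\<^sup>2 + R"
    by linarith
  then have key2: "x0\<^sup>2 - 2 * \<sigma> * \<tau> * x0 > R"
    by (simp add: power2_eq_square algebra_simps)
  show ?thesis
  proof (cases "\<sigma> > 0")
    case True
    define \<mu> where "\<mu> = \<sigma> * \<tau> / x0"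
    have "\<sigma> * \<tau> < x0" using x0 sq by linarith
    then have \<mu>1: "\<mu> < 1" using x0p by (simp add: \<mu>_def)
    have \<mu>0: "\<mu> \<ge> 0" using st x0p by (simp add: \<mu>_def)
    have "(1 - \<mu>) * x0\<^sup>2 \<le> (1 - \<mu>) * S" using \<mu>1 x0 by (intro mult_left_mono) auto
    moreover have "\<mu> * x0\<^sup>2 = \<sigma> * \<tau> * x0" using x0p by (simp add: \<mu>_def power2_eq_square)
    moreover have "- \<mu> * S - \<sigma> * \<tau> * x0 < 2 * Cc" using cross True by (simp add: \<mu>_def)
    ultimately have "x0\<^sup>2 - 2 * \<sigma> * \<tau> * x0 < S + 2 * Cc"
      by (simp add: algebra_simps)
    then show ?thesis using key2 c0 by linarith
  next
    case False
    then have "\<sigma> = 0" using assms by simp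
    then show ?thesis using key2 c0 zero x0 by simp
  qed
qed

lemma norm_sq_vec: "(norm (x :: real^'d))\<^sup>2 = (\<Sum>i\<in>UNIV. (x $ i)\<^sup>2)"
  by (simp add: norm_vec_def L2_set_def sum_nonneg)

lemma row_neg: "row A (- w) i \<omega> = - row A w i \<omega>"
  by (simp add: row_def sum_negf)

lemma row_zero: "row A 0 i \<omega> = 0"
  by (simp add: row_def)

lemma row_vec: "row A w i \<omega> = (A \<omega> *v w) $ i"
  by (simp add: row_def matrix_vector_mult_def)

lemma sq_expand:
  fixes A :: "'a \<Rightarrow> real^'n::finite^'d::finite" and z :: "'a \<Rightarrow> real^'d"
  shows "(norm (A \<omega> *v xo + z \<omega> - A \<omega> *v c))\<^sup>2 =
    (\<Sum>i\<in>UNIV. (row A (xo - c) i \<omega>)\<^sup>2) + 2 * (\<Sum>i\<in>UNIV. row A (xo - c) i \<omega> * z \<omega> $ i) + (\<Sum>i\<in>UNIV. (z \<omega> $ i)\<^sup>2)"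
proof -
  have e: "A \<omega> *v (xo - c) = A \<omega> *v xo - A \<omega> *v c" by (rule matrix_vector_mult_diff_distrib)
  have e2: "A \<omega> *v xo + z \<omega> - A \<omega> *v c = A \<omega> *v (xo - c) + z \<omega>"
    unfolding e by (simp add: algebra_simps)
  have "(norm (A \<omega> *v xo + z \<omega> - A \<omega> *v c))\<^sup>2 = (norm (A \<omega> *v (xo - c) + z \<omega>))\<^sup>2"
    by (simp only: e2)
  also have "\<dots> = (\<Sum>i\<in>UNIV. (row A (xo - c) i \<omega> + z \<omega> $ i)\<^sup>2)"
    by (simp only: norm_sq_vec vector_add_component row_vec)
  also have "\<dots> = (\<Sum>i\<in>UNIV. (row A (xo - c) i \<omega>)\<^sup>2 + 2 * (row A (xo - c) i \<omega> * z \<omega> $ i) + (z \<omega> $ i)\<^sup>2)"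
    by (intro sum.cong refl) (simp add: power2_sum algebra_simps)
  also have "\<dots> = (\<Sum>i\<in>UNIV. (row A (xo - c) i \<omega>)\<^sup>2) + 2 * (\<Sum>i\<in>UNIV. row A (xo - c) i \<omega> * z \<omega> $ i) + (\<Sum>i\<in>UNIV. (z \<omega> $ i)\<^sup>2)"
    by (simp add: sum.distrib sum_distrib_left)
  finally show ?thesis .
qed

lemma code_finite:
  assumes "is_code Q r E D"
  shows "finite (codebook E D Q)" "card (codebook E D Q) \<le> 2 ^ r"
proof -
  have sub: "codebook E D Q \<subseteq> D ` {1..2^r}"
    using assms by (auto simp: codebook_def is_code_def)
  show "finite (codebook E D Q)" by (rule finite_subset[OF sub]) auto
  have "card (codebook E D Q) \<le> card (D ` {1..2^r})" by (rule card_mono[OF _ sub]) auto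
  also have "\<dots> \<le> card {1..(2::nat)^r}" by (rule card_image_le) auto
  finally show "card (codebook E D Q) \<le> 2 ^ r" by simp
qed

lemma dist_le:
  fixes Q :: "(real^'n::finite) set"
  assumes "compact Q" "is_code Q r E D" "x \<in> Q"
  shows "norm (x - D (E x)) \<le> distortion E D Q"
proof -
  obtain B where B: "\<And>y. y \<in> Q \<Longrightarrow> norm y \<le> B"
    using compact_imp_bounded[OF assms(1)] by (auto simp: bounded_iff)
  have fin: "finite (D ` {1..2^r})" by auto
  obtain B' where B': "\<And>y. y \<in> D ` {1..2^r} \<Longrightarrow> norm y \<le> B'"
    using finite_imp_bounded[OF fin] by (auto simp: bounded_iff)
  have "bdd_above ((\<lambda>x. norm (x - D (E x))) ` Q)"
  proof (rule bdd_aboveI2)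
    fix y assume y: "y \<in> Q"
    then have "D (E y) \<in> D ` {1..2^r}" using assms(2) by (auto simp: is_code_def)
    then have "norm (D (E y)) \<le> B'" by (rule B')
    moreover have "norm (y - D (E y)) \<le> norm y + norm (D (E y))" by (rule norm_triangle_ineq4)
    ultimately show "norm (y - D (E y)) \<le> B + B'" using B[OF y] by linarith
  qed
  then show ?thesis unfolding distortion_def using assms(3) by (rule cSUP_upper2) simp
qed

lemma gsetup2I:
  assumes "prob_space M" "prob_space.indep_vars M (\<lambda>_. borel) (fam A z) UNIV"
    "\<And>i j. distributed M lborel (\<lambda>\<omega>. A \<omega> $ i $ j) (\<lambda>x. ennreal (std_normal_density x))"
  shows "gsetup2 M A z"
  using assms unfolding gsetup2_def gsetup_def gsetup_axioms_def gsetup2_axioms_def by auto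

lemma gsetup3I:
  assumes "gsetup2 M A z" "\<sigma> > 0"
    "\<And>i. distributed M lborel (\<lambda>\<omega>. z \<omega> $ i) (\<lambda>x. ennreal (normal_density 0 \<sigma> x))"
  shows "gsetup3 M A z \<sigma>"
  using assms unfolding gsetup3_def gsetup3_axioms_def by auto

theorem theorem4:
  fixes M :: "'a measure"
    and Q :: "(real^'n) set"
    and E :: "real^'n \<Rightarrow> nat" and D :: "nat \<Rightarrow> real^'n"
    and r :: nat and \<delta> \<eta> \<epsilon>' \<sigma> :: real
    and A :: "'a \<Rightarrow> real^'n^'d" and z :: "'a \<Rightarrow> real^'d"
  assumes "compact Q"
    and "is_code Q r E D"
    and "\<delta> = distortion E D Q"
    and "0 < \<delta>" and "exp 1 * \<delta> < 1"
    and "\<eta> > 1"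
    and "real CARD('d) = \<eta> * r / log 2 (1 / (exp 1 * \<delta>))"
    and "\<epsilon>' > 0" and "\<eta> / ln (1 / (exp 1 * \<delta>)) \<le> \<epsilon>'"
    and "\<sigma> \<ge> 0"
    and "prob_space M"
    and "prob_space.indep_vars M (\<lambda>_. borel)
           (\<lambda>k \<omega>. case k of Inl (i, j) \<Rightarrow> A \<omega> $ i $ j | Inr i \<Rightarrow> z \<omega> $ i) UNIV"
    and "\<And>i j. distributed M lborel (\<lambda>\<omega>. A \<omega> $ i $ j) (\<lambda>x. ennreal (std_normal_density x))"
    and "\<sigma> > 0 \<Longrightarrow> (\<And>i. distributed M lborel (\<lambda>\<omega>. z \<omega> $ i) (\<lambda>x. ennreal (normal_density 0 \<sigma> x)))"
    and "\<sigma> = 0 \<Longrightarrow> (AE \<omega> in M. z \<omega> = 0)"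
    and "xo \<in> Q"
  shows "let \<beta> = sqrt (log 2 (1 / (exp 1 * \<delta>)));
             L = log 2 (1 / (exp 1 * \<delta>));
             C = codebook E D Q;
             bnd = (1 / (exp 1 * \<delta>) powr ((1 + \<epsilon>') / \<eta>)) *
                   (2 * \<sigma> * \<beta> / sqrt \<eta> +
                    sqrt (4 * \<sigma>\<^sup>2 * \<beta>\<^sup>2 / \<eta> + 2 * \<delta>\<^sup>2 + 4 * \<sigma> * \<delta> / sqrt \<eta>))
         in measure M {\<omega> \<in> space M.
                \<forall>xhat \<in> ls_argmin C (A \<omega>) (A \<omega> *v xo + z \<omega>). norm (xhat - xo) \<le> bnd}
            > 1 - 2 * exp (- 0.15 * \<eta> * r / L) - exp (- r / L) - exp (- 0.3 * r)
                - exp (- 0.3 * \<epsilon>' * r)"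
proof -
  note P = assms(11)
  interpret prob_space M by (rule P)
  have famEq: "fam A z = (\<lambda>k \<omega>. case k of Inl (i, j) \<Rightarrow> A \<omega> $ i $ j | Inr i \<Rightarrow> z \<omega> $ i)"
    by (simp add: fam_def fun_eq_iff)
  have G2: "gsetup2 M A z"
    by (rule gsetup2I[OF P]) (use assms(12,13) famEq in auto)
  interpret G: gsetup2 M A z by (rule G2)
  define d where "d = real CARD('d)"
  define L where "L = log 2 (1 / (exp 1 * \<delta>))"
  define \<kappa> where "\<kappa> = (exp 1 * \<delta>) powr ((1 + \<epsilon>') / \<eta>)"
  define C where "C = codebook E D Q"
  define c0 where "c0 = D (E xo)"
  define v0 where "v0 = xo - c0"
  define bnd where "bnd = (1 / (exp 1 * \<delta>) powr ((1 + \<epsilon>') / \<eta>)) *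
                   (2 * \<sigma> * sqrt L / sqrt \<eta> +
                    sqrt (4 * \<sigma>\<^sup>2 * (sqrt L)\<^sup>2 / \<eta> + 2 * \<delta>\<^sup>2 + 4 * \<sigma> * \<delta> / sqrt \<eta>))"
  define \<tau> where "\<tau> = 2 * sqrt (real r)"
  define \<tau>0 where "\<tau>0 = sqrt (2 * d / \<eta>)"
  define y0 where "y0 = sqrt (2 * d) * \<delta>"
  define \<mu>0 where "\<mu>0 = \<sigma> * \<tau>0 / y0"
  define R where "R = 2 * d * \<delta>\<^sup>2 + 4 * d * \<sigma> * \<delta> / sqrt \<eta>"
  define x0 where "x0 c = \<kappa> * sqrt d * norm (xo - c)" for c
  define Cfar where "Cfar = {c\<in>C. bnd < norm (xo - c)}"
  define Sq where "Sq w \<omega> = (\<Sum>i\<in>UNIV. (row A w i \<omega>)\<^sup>2)" for w \<omega>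
  define Cr where "Cr w \<omega> = (\<Sum>i\<in>UNIV. row A w i \<omega> * z \<omega> $ i)" for w \<omega>
  define B1 where "B1 = {\<omega>\<in>space M. 2 * d * \<delta>\<^sup>2 < Sq v0 \<omega>}"
  define B3 where "B3 = (if \<sigma> > 0 then {\<omega>\<in>space M. (\<Sum>i\<in>UNIV. 2 * row A (- v0) i \<omega> * z \<omega> $ i + \<mu>0 * (row A (- v0) i \<omega>)\<^sup>2) \<le> - (\<sigma>\<^sup>2 * \<tau>0\<^sup>2 / \<mu>0)}
                       else {\<omega>\<in>space M. \<exists>i. z \<omega> $ i \<noteq> 0})"
  define B2 where "B2 c = {\<omega>\<in>space M. (\<Sum>i\<in>UNIV. (row A (xo - c) i \<omega>)\<^sup>2) \<le> \<kappa>\<^sup>2 * d * (norm (xo - c))\<^sup>2}" for c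
  define B4 where "B4 c = (if \<sigma> > 0 then {\<omega>\<in>space M. (\<Sum>i\<in>UNIV. 2 * row A (xo - c) i \<omega> * z \<omega> $ i + (\<sigma> * \<tau> / x0 c) * (row A (xo - c) i \<omega>)\<^sup>2) \<le> - (\<sigma>\<^sup>2 * \<tau>\<^sup>2 / (\<sigma> * \<tau> / x0 c))}
                       else {})" for c
  define U where "U = B1 \<union> B3 \<union> (\<Union>c\<in>Cfar. B2 c \<union> B4 c)"
  define Good where "Good = {\<omega> \<in> space M. \<forall>xhat \<in> ls_argmin C (A \<omega>) (A \<omega> *v xo + z \<omega>). norm (xhat - xo) \<le> bnd}"

  have \<delta>0: "0 < \<delta>" by (rule assms(4))
  have e\<delta>: "0 < exp 1 * \<delta>" "exp 1 * \<delta> < 1" using assms(4,5) by auto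
  have \<eta>0: "\<eta> > 0" using assms(6) by simp
  have d1: "d \<ge> 1" by (simp add: d_def Suc_le_eq)
  have lnpos: "ln (1 / (exp 1 * \<delta>)) > 0" using e\<delta> by simp
  have L0: "L > 0" using e\<delta> by (simp add: L_def)
  have Lln: "L = ln (1 / (exp 1 * \<delta>)) / ln 2" by (simp add: L_def log_def)
  have dL: "d * L = \<eta> * real r" using assms(7) L0 by (simp add: d_def L_def field_simps)
  have r0: "real r > 0"
  proof -
    have "d * L > 0" using d1 L0 by simp
    then show ?thesis using dL \<eta>0 by (simp add: zero_less_mult_iff)
  qed
  have \<kappa>0: "\<kappa> > 0" using e\<delta> \<delta>0 by (simp add: \<kappa>_def)
  have \<kappa>1: "\<kappa> < 1"
  proof -
    have "(1 + \<epsilon>') / \<eta> > 0" using assms(8) \<eta>0 by simp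
    then have "(exp 1 * \<delta>) powr ((1 + \<epsilon>') / \<eta>) < 1 powr ((1 + \<epsilon>') / \<eta>)"
      using e\<delta> by (intro powr_less_mono2) auto
    then show ?thesis unfolding \<kappa>_def by simp
  qed
  have \<tau>0pos: "\<tau> > 0" using r0 by (simp add: \<tau>_def)
  define Qq where "Qq = 4 * \<sigma>\<^sup>2 * (sqrt L)\<^sup>2 / \<eta> + 2 * \<delta>\<^sup>2 + 4 * \<sigma> * \<delta> / sqrt \<eta>"
  have Qq0: "Qq \<ge> 0" using L0 \<eta>0 \<delta>0 assms(10) by (simp add: Qq_def)
  have bnd': "bnd = (1 / \<kappa>) * (2 * \<sigma> * sqrt L / sqrt \<eta> + sqrt Qq)"
    by (simp add: bnd_def \<kappa>_def Qq_def)
  have bnd0: "bnd \<ge> 0" using \<kappa>0 Qq0 L0 \<eta>0 assms(10) unfolding bnd' by simp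
  have bnd_eq: "\<kappa> * sqrt d * bnd = \<sigma> * \<tau> + sqrt (\<sigma>\<^sup>2 * \<tau>\<^sup>2 + R)"
  proof -
    have "\<kappa> * sqrt d * bnd = sqrt d * (2 * \<sigma> * sqrt L / sqrt \<eta>) + sqrt d * sqrt Qq"
      using \<kappa>0 unfolding bnd' by (simp add: field_simps)
    also have "sqrt d * (2 * \<sigma> * sqrt L / sqrt \<eta>) = \<sigma> * \<tau>"
    proof -
      have "sqrt d * sqrt L = sqrt \<eta> * sqrt (real r)"
        using dL by (simp add: real_sqrt_mult[symmetric])
      then show ?thesis using \<eta>0 by (simp add: \<tau>_def field_simps)
    qed
    also have "sqrt d * sqrt Qq = sqrt (\<sigma>\<^sup>2 * \<tau>\<^sup>2 + R)"
    proof -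
      have "d * Qq = 4 * \<sigma>\<^sup>2 * (d * L) / \<eta> + 2 * d * \<delta>\<^sup>2 + 4 * d * \<sigma> * \<delta> / sqrt \<eta>"
        using L0 by (simp add: Qq_def field_simps)
      also have "\<dots> = \<sigma>\<^sup>2 * \<tau>\<^sup>2 + R"
        using \<eta>0 r0 unfolding dL by (simp add: R_def \<tau>_def power_mult_distrib field_simps)
      finally show ?thesis by (simp add: real_sqrt_mult[symmetric])
    qed
    finally show ?thesis .
  qed

  have Cfin: "finite C" and Ccard: "card C \<le> 2 ^ r"
    using code_finite[OF assms(2)] by (auto simp: C_def)
  have c0C: "c0 \<in> C" using assms(16) by (auto simp: C_def c0_def codebook_def)
  have v0\<delta>: "norm v0 \<le> \<delta>"
    using dist_le[OF assms(1,2,16)] assms(3) by (simp add: v0_def c0_def)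
  have Cfarfin: "finite Cfar" using Cfin by (simp add: Cfar_def)
  have Cfarcard: "real (card Cfar) \<le> 2 ^ r"
  proof -
    have "card Cfar \<le> card C" using Cfin by (intro card_mono) (auto simp: Cfar_def)
    then show ?thesis using Ccard by (metis of_nat_le_iff of_nat_numeral of_nat_power order_trans)
  qed

  have B1m: "B1 \<in> sets M" unfolding B1_def Sq_def by measurable
  have B3m: "B3 \<in> sets M"
  proof (cases "\<sigma> > 0")
    case True
    then show ?thesis unfolding B3_def by simp measurable
  next
    case False
    have "{\<omega>\<in>space M. \<exists>i. z \<omega> $ i \<noteq> 0} = (\<Union>i\<in>UNIV. {\<omega>\<in>space M. z \<omega> $ i \<noteq> 0})" by auto
    also have "\<dots> \<in> sets M" by (intro sets.finite_UN) auto
    finally show ?thesis using False unfolding B3_def by simp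
  qed
  have B2m: "B2 c \<in> sets M" for c unfolding B2_def by measurable
  have B4m: "B4 c \<in> sets M" for c
    by (cases "\<sigma> > 0") (simp_all add: B4_def, measurable)
  have Um: "U \<in> sets M" unfolding U_def
    by (intro sets.Un sets.finite_UN B1m B3m B2m B4m Cfarfin)
  define F where "F c \<omega> = (norm (A \<omega> *v xo + z \<omega> - A \<omega> *v c))\<^sup>2" for c \<omega>
  have Fm[measurable]: "F c \<in> borel_measurable M" for c
  proof -
    have "F c = (\<lambda>\<omega>. (\<Sum>i\<in>UNIV. (row A (xo - c) i \<omega>)\<^sup>2) + 2 * (\<Sum>i\<in>UNIV. row A (xo - c) i \<omega> * z \<omega> $ i) + (\<Sum>i\<in>UNIV. (z \<omega> $ i)\<^sup>2))"
      by (simp add: F_def sq_expand fun_eq_iff)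
    also have "\<dots> \<in> borel_measurable M" by measurable
    finally show ?thesis .
  qed
  have Good_eq: "Good = {\<omega>\<in>space M. \<forall>c\<in>C. (\<forall>c'\<in>C. F c \<omega> \<le> F c' \<omega>) \<longrightarrow> norm (c - xo) \<le> bnd}"
    by (auto simp: Good_def ls_argmin_def F_def)
  have Goodm: "Good \<in> sets M"
  proof -
    have "Measurable.pred M (\<lambda>\<omega>. \<forall>c\<in>C. (\<forall>c'\<in>C. F c \<omega> \<le> F c' \<omega>) \<longrightarrow> norm (c - xo) \<le> bnd)"
    proof (rule pred_intros_finite(3)[OF Cfin])
      fix c assume "c \<in> C"
      have "Measurable.pred M (\<lambda>\<omega>. \<forall>c'\<in>C. F c \<omega> \<le> F c' \<omega>)"
        by (rule pred_intros_finite(3)[OF Cfin]) measurable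
      then show "Measurable.pred M (\<lambda>\<omega>. (\<forall>c'\<in>C. F c \<omega> \<le> F c' \<omega>) \<longrightarrow> norm (c - xo) \<le> bnd)"
        by measurable
    qed
    then show ?thesis unfolding Good_eq pred_def .
  qed

  have pB1: "measure M B1 \<le> exp (- d / 2) * sqrt 2 ^ CARD('d)"
  proof (cases "v0 = 0")
    case True
    have "0 < d * \<delta>\<^sup>2" using \<delta>0 d1 by simp
    then have "B1 = {}" using True by (auto simp: B1_def Sq_def row_zero)
    then show ?thesis by simp
  next
    case False
    let ?T = "{\<omega>\<in>space M. 2 * real CARD('d) * (norm v0)\<^sup>2 \<le> (\<Sum>i\<in>UNIV. (row A v0 i \<omega>)\<^sup>2)}"
    have "B1 \<subseteq> ?T"
    proof
      fix \<omega> assume w: "\<omega> \<in> B1"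
      have h: "2 * d * (norm v0)\<^sup>2 \<le> 2 * d * \<delta>\<^sup>2"
        using v0\<delta> d1 by (intro mult_left_mono power_mono) auto
      have a: "\<omega> \<in> space M" "2 * d * \<delta>\<^sup>2 < Sq v0 \<omega>" using w by (auto simp: B1_def)
      have "2 * d * (norm v0)\<^sup>2 \<le> Sq v0 \<omega>" using h a(2) by linarith
      then have "2 * real CARD('d) * (norm v0)\<^sup>2 \<le> (\<Sum>i\<in>UNIV. (row A v0 i \<omega>)\<^sup>2)"
        unfolding Sq_def d_def .
      then show "\<omega> \<in> ?T" using a(1) by blast
    qed
    moreover have "?T \<in> sets M" by measurable
    ultimately have "measure M B1 \<le> measure M ?T" by (rule finite_measure_mono)
    also have "\<dots> \<le> exp (- real CARD('d) / 2) * sqrt 2 ^ CARD('d)" by (rule G.tail_up[OF False])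
    finally show ?thesis by (simp add: d_def)
  qed
  have \<tau>0p: "\<tau>0 > 0" using d1 \<eta>0 by (simp add: \<tau>0_def)
  have y0p: "y0 > 0" using d1 \<delta>0 by (simp add: y0_def)
  have pB3: "measure M B3 \<le> exp (- \<tau>0\<^sup>2 / 2)"
  proof (cases "\<sigma> > 0")
    case True
    interpret G3: gsetup3 M A z \<sigma> by (rule gsetup3I[OF G2 True assms(14)[OF True]])
    have \<mu>0p: "\<mu>0 > 0" using True \<tau>0p y0p by (simp add: \<mu>0_def)
    show ?thesis
    proof (cases "v0 = 0")
      case v: True
      have "0 < \<sigma>\<^sup>2 * \<tau>0\<^sup>2 / \<mu>0" using True \<tau>0p \<mu>0p by simp
      then have "B3 = {}" using True v by (auto simp: B3_def row_zero)
      then show ?thesis by simp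
    next
      case v: False
      have "- v0 \<noteq> 0" using v by simp
      from G3.tail_cross[OF this \<mu>0p, of \<tau>0] show ?thesis using True by (simp add: B3_def)
    qed
  next
    case False
    then have s0: "\<sigma> = 0" using assms(10) by simp
    have N: "{\<omega>\<in>space M. \<exists>i. z \<omega> $ i \<noteq> 0} \<in> sets M"
    proof -
      have "{\<omega>\<in>space M. \<exists>i. z \<omega> $ i \<noteq> 0} = (\<Union>i\<in>UNIV. {\<omega>\<in>space M. z \<omega> $ i \<noteq> 0})" by auto
      also have "\<dots> \<in> sets M" by (intro sets.finite_UN) auto
      finally show ?thesis .
    qed
    have "AE \<omega> in M. z \<omega> = 0" by (rule assms(15)[OF s0])
    then have "AE \<omega> in M. \<not> (\<exists>i. z \<omega> $ i \<noteq> 0)" by eventually_elim (simp)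
    then have "emeasure M {\<omega>\<in>space M. \<exists>i. z \<omega> $ i \<noteq> 0} = 0"
      using AE_iff_measurable[OF N, of "\<lambda>\<omega>. \<not> (\<exists>i. z \<omega> $ i \<noteq> 0)"] by simp
    then have "measure M B3 = 0" using False by (simp add: B3_def measure_def)
    then show ?thesis by simp
  qed
  have u0: "xo - c \<noteq> 0" if "c \<in> Cfar" for c
    using that bnd0 by (auto simp: Cfar_def)
  have pB2: "measure M (B2 c) \<le> exp (d / 2) * \<kappa> ^ CARD('d)" if "c \<in> Cfar" for c
  proof -
    have "\<kappa>\<^sup>2 < 1" using \<kappa>0 \<kappa>1 by (simp add: power_less_one_iff)
    from G.tail_low[OF u0[OF that] _ this] \<kappa>0
    show ?thesis by (simp add: B2_def d_def)
  qed
  have x0p: "x0 c > 0" if "c \<in> Cfar" for c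
    using u0[OF that] \<kappa>0 d1 by (simp add: x0_def)
  have pB4: "measure M (B4 c) \<le> exp (- \<tau>\<^sup>2 / 2)" if "c \<in> Cfar" for c
  proof (cases "\<sigma> > 0")
    case True
    interpret G3: gsetup3 M A z \<sigma> by (rule gsetup3I[OF G2 True assms(14)[OF True]])
    have "\<sigma> * \<tau> / x0 c > 0" using True \<tau>0pos x0p[OF that] by simp
    from G3.tail_cross[OF u0[OF that] this, of \<tau>] show ?thesis using True by (simp add: B4_def)
  next
    case False
    then show ?thesis by (simp add: B4_def)
  qed
  have pU: "measure M U \<le> exp (- d / 2) * sqrt 2 ^ CARD('d) + exp (- \<tau>0\<^sup>2 / 2)
      + 2 ^ r * (exp (d / 2) * \<kappa> ^ CARD('d) + exp (- \<tau>\<^sup>2 / 2))"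
  proof -
    have UNm: "(\<Union>c\<in>Cfar. B2 c \<union> B4 c) \<in> sets M"
      by (intro sets.finite_UN sets.Un B2m B4m Cfarfin)
    have "measure M U \<le> measure M (B1 \<union> B3) + measure M (\<Union>c\<in>Cfar. B2 c \<union> B4 c)"
      unfolding U_def by (intro measure_Un_le sets.Un B1m B3m UNm)
    also have "measure M (B1 \<union> B3) \<le> measure M B1 + measure M B3"
      by (intro measure_Un_le B1m B3m)
    also have "measure M (\<Union>c\<in>Cfar. B2 c \<union> B4 c) \<le> (\<Sum>c\<in>Cfar. measure M (B2 c \<union> B4 c))"
      by (intro measure_UNION_le Cfarfin sets.Un B2m B4m)
    also have "\<dots> \<le> (\<Sum>c\<in>Cfar. exp (d / 2) * \<kappa> ^ CARD('d) + exp (- \<tau>\<^sup>2 / 2))"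
    proof (intro sum_mono)
      fix c assume c: "c \<in> Cfar"
      have "measure M (B2 c \<union> B4 c) \<le> measure M (B2 c) + measure M (B4 c)"
        by (intro measure_Un_le B2m B4m)
      then show "measure M (B2 c \<union> B4 c) \<le> exp (d / 2) * \<kappa> ^ CARD('d) + exp (- \<tau>\<^sup>2 / 2)"
        using pB2[OF c] pB4[OF c] by linarith
    qed
    also have "\<dots> = real (card Cfar) * (exp (d / 2) * \<kappa> ^ CARD('d) + exp (- \<tau>\<^sup>2 / 2))"
      by simp
    also have "\<dots> \<le> 2 ^ r * (exp (d / 2) * \<kappa> ^ CARD('d) + exp (- \<tau>\<^sup>2 / 2))"
      using Cfarcard \<kappa>0 by (intro mult_right_mono) auto
    finally show ?thesis using pB1 pB3 by linarith
  qed

  have Fexp: "F c \<omega> = Sq (xo - c) \<omega> + 2 * Cr (xo - c) \<omega> + (\<Sum>i\<in>UNIV. (z \<omega> $ i)\<^sup>2)" for c \<omega>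
    by (simp add: F_def Sq_def Cr_def sq_expand)
  have sum2: "(\<Sum>i\<in>UNIV. 2 * row A w i \<omega> * z \<omega> $ i + m * (row A w i \<omega>)\<^sup>2) = 2 * Cr w \<omega> + m * Sq w \<omega>" for w m \<omega>
    by (simp add: Cr_def Sq_def sum.distrib sum_distrib_left mult.assoc)
  have y0sq: "y0\<^sup>2 = 2 * d * \<delta>\<^sup>2" using d1 by (simp add: y0_def power_mult_distrib)
  have st0y0: "\<sigma> * \<tau>0 * y0 = 2 * d * \<sigma> * \<delta> / sqrt \<eta>"
  proof -
    have "\<tau>0 * sqrt (2 * d) = 2 * d / sqrt \<eta>"
      using d1 \<eta>0 by (simp add: \<tau>0_def real_sqrt_divide field_simps)
    then show ?thesis by (simp add: y0_def field_simps)
  qed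
  have sub: "space M - U \<subseteq> Good"
  proof
    fix \<omega> assume \<omega>: "\<omega> \<in> space M - U"
    then have sp: "\<omega> \<in> space M" and n1: "\<omega> \<notin> B1" and n3: "\<omega> \<notin> B3"
      and n2: "\<And>c. c \<in> Cfar \<Longrightarrow> \<omega> \<notin> B2 c" and n4: "\<And>c. c \<in> Cfar \<Longrightarrow> \<omega> \<notin> B4 c"
      by (auto simp: U_def)
    have zero: "\<sigma> = 0 \<Longrightarrow> Cr w \<omega> = 0" for w
    proof -
      assume s0: "\<sigma> = 0"
      then have "\<forall>i. z \<omega> $ i = 0" using n3 sp by (auto simp: B3_def)
      then show ?thesis by (simp add: Cr_def)
    qed
    have sqv0: "Sq v0 \<omega> \<le> 2 * d * \<delta>\<^sup>2" using n1 sp by (auto simp: B1_def)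
    have hc0: "Sq v0 \<omega> + 2 * Cr v0 \<omega> \<le> R"
    proof (cases "\<sigma> > 0")
      case True
      have \<mu>0p: "\<mu>0 > 0" using True \<tau>0p y0p by (simp add: \<mu>0_def)
      have "\<not> (\<Sum>i\<in>UNIV. 2 * row A (- v0) i \<omega> * z \<omega> $ i + \<mu>0 * (row A (- v0) i \<omega>)\<^sup>2) \<le> - (\<sigma>\<^sup>2 * \<tau>0\<^sup>2 / \<mu>0)"
        using n3 sp True by (auto simp: B3_def)
      moreover have "(\<Sum>i\<in>UNIV. 2 * row A (- v0) i \<omega> * z \<omega> $ i + \<mu>0 * (row A (- v0) i \<omega>)\<^sup>2) = - 2 * Cr v0 \<omega> + \<mu>0 * Sq v0 \<omega>"
        by (simp add: row_neg Cr_def Sq_def sum.distrib sum_distrib_left sum_negf sum_subtractf mult.assoc)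
      ultimately have a: "2 * Cr v0 \<omega> < \<mu>0 * Sq v0 \<omega> + \<sigma>\<^sup>2 * \<tau>0\<^sup>2 / \<mu>0" by linarith
      have b: "\<mu>0 * Sq v0 \<omega> \<le> \<mu>0 * y0\<^sup>2" using sqv0 \<mu>0p y0sq by (intro mult_left_mono) auto
      have c: "\<mu>0 * y0\<^sup>2 = \<sigma> * \<tau>0 * y0" using y0p by (simp add: \<mu>0_def power2_eq_square)
      have e: "\<sigma>\<^sup>2 * \<tau>0\<^sup>2 / \<mu>0 = \<sigma> * \<tau>0 * y0" using True \<tau>0p y0p by (simp add: \<mu>0_def power2_eq_square field_simps)
      have "2 * Cr v0 \<omega> < 2 * (\<sigma> * \<tau>0 * y0)" using a b c e by linarith
      then have "2 * Cr v0 \<omega> < 2 * (2 * d * \<sigma> * \<delta> / sqrt \<eta>)" unfolding st0y0 .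
      moreover have "2 * (2 * d * \<sigma> * \<delta> / sqrt \<eta>) = 4 * d * \<sigma> * \<delta> / sqrt \<eta>" by simp
      ultimately show ?thesis using sqv0 unfolding R_def by linarith
    next
      case False
      then have "\<sigma> = 0" using assms(10) by simp
      then show ?thesis using sqv0 zero[of v0] by (simp add: R_def)
    qed
    have "\<forall>c\<in>C. (\<forall>c'\<in>C. F c \<omega> \<le> F c' \<omega>) \<longrightarrow> norm (c - xo) \<le> bnd"
    proof (intro ballI impI)
      fix c assume cC: "c \<in> C" and min: "\<forall>c'\<in>C. F c \<omega> \<le> F c' \<omega>"
      show "norm (c - xo) \<le> bnd"
      proof (rule ccontr)
        assume "\<not> norm (c - xo) \<le> bnd"
        then have far: "bnd < norm (xo - c)" by (simp add: norm_minus_commute)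
        then have cF: "c \<in> Cfar" using cC by (simp add: Cfar_def)
        have kd: "\<kappa> * sqrt d > 0" using \<kappa>0 d1 by simp
        have x0sq: "(x0 c)\<^sup>2 = \<kappa>\<^sup>2 * d * (norm (xo - c))\<^sup>2"
          using d1 by (simp add: x0_def power_mult_distrib)
        have h2: "(x0 c)\<^sup>2 \<le> Sq (xo - c) \<omega>"
          using n2[OF cF] sp x0sq by (auto simp: B2_def Sq_def)
        have hx: "\<sigma> * \<tau> + sqrt (\<sigma>\<^sup>2 * \<tau>\<^sup>2 + R) < x0 c"
        proof -
          have "\<kappa> * sqrt d * bnd < \<kappa> * sqrt d * norm (xo - c)"
            using far kd by (intro mult_strict_left_mono) auto
          then show ?thesis using bnd_eq by (simp add: x0_def)
        qed
        have hcross: "- (\<sigma> * \<tau> / x0 c) * Sq (xo - c) \<omega> - \<sigma> * \<tau> * x0 c < 2 * Cr (xo - c) \<omega>"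
          if s: "\<sigma> > 0"
        proof -
          have "\<not> (\<Sum>i\<in>UNIV. 2 * row A (xo - c) i \<omega> * z \<omega> $ i + (\<sigma> * \<tau> / x0 c) * (row A (xo - c) i \<omega>)\<^sup>2) \<le> - (\<sigma>\<^sup>2 * \<tau>\<^sup>2 / (\<sigma> * \<tau> / x0 c))"
            using n4[OF cF] sp s by (auto simp: B4_def)
          then have "- (\<sigma>\<^sup>2 * \<tau>\<^sup>2 / (\<sigma> * \<tau> / x0 c)) < 2 * Cr (xo - c) \<omega> + (\<sigma> * \<tau> / x0 c) * Sq (xo - c) \<omega>"
            unfolding sum2 by linarith
          moreover have "\<sigma>\<^sup>2 * \<tau>\<^sup>2 / (\<sigma> * \<tau> / x0 c) = \<sigma> * \<tau> * x0 c"
            using s \<tau>0pos x0p[OF cF] by (simp add: power2_eq_square field_simps)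
          ultimately show ?thesis by linarith
        qed
        have R0: "R \<ge> 0" using d1 \<delta>0 assms(10) \<eta>0 by (simp add: R_def)
        have "Sq v0 \<omega> + 2 * Cr v0 \<omega> < Sq (xo - c) \<omega> + 2 * Cr (xo - c) \<omega>"
          by (rule det_core[OF assms(10) \<tau>0pos R0 hx h2 hcross zero hc0])
        then have "F c0 \<omega> < F c \<omega>" by (simp add: Fexp v0_def)
        moreover have "F c \<omega> \<le> F c0 \<omega>" using min c0C by blast
        ultimately show False by simp
      qed
    qed
    then show "\<omega> \<in> Good" using sp by (simp add: Good_eq)
  qed

  have "measure M Good \<ge> 1 - measure M U"
  proof -
    have "measure M (space M - U) \<le> measure M Good"
      by (rule finite_measure_mono[OF sub Goodm])
    moreover have "measure M (space M - U) = 1 - measure M U"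
      by (rule prob_compl[OF Um])
    ultimately show ?thesis by simp
  qed
  moreover have "1 - (exp (- d / 2) * sqrt 2 ^ CARD('d) + exp (- \<tau>0\<^sup>2 / 2)
      + 2 ^ r * (exp (d / 2) * \<kappa> ^ CARD('d) + exp (- \<tau>\<^sup>2 / 2)))
      > 1 - 2 * exp (- 0.15 * \<eta> * r / L) - exp (- r / L) - exp (- 0.3 * r) - exp (- 0.3 * \<epsilon>' * r)"
  proof -
    have l2a: "ln 2 \<le> (0.7::real)" by (rule ln2_le)
    have l2b: "(0.6::real) \<le> ln 2" by (rule ln2_ge)
    have dd: "\<eta> * r / L = d" using dL L0 by (simp add: field_simps)
    have dd2: "r / L = d / \<eta>" using dL L0 \<eta>0 by (simp add: field_simps)
    have pow2: "(2::real) ^ r = exp (real r * ln 2)"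
    proof -
      have "exp (real r * ln 2) = exp (ln 2) ^ r" by (rule exp_of_nat_mult)
      then show ?thesis by simp
    qed
    have i1: "exp (- d / 2) * sqrt 2 ^ CARD('d) \<le> exp (- 0.15 * \<eta> * r / L)"
    proof -
      have "sqrt 2 ^ CARD('d) = exp (d * (ln 2 / 2))"
      proof -
        have "sqrt (2::real) = exp (ln 2 / 2)"
        proof -
          have "exp (ln 2 / 2) ^ 2 = (2::real)"
            by (subst exp_of_nat_mult[symmetric]) simp
          then show ?thesis by (metis exp_gt_zero less_eq_real_def real_sqrt_unique)
        qed
        moreover have "exp (d * (ln 2 / 2)) = exp (ln 2 / 2) ^ CARD('d)"
          unfolding d_def by (rule exp_of_nat_mult)
        ultimately show ?thesis by simp
      qed
      then have "exp (- d / 2) * sqrt 2 ^ CARD('d) = exp (- d / 2 + d * (ln 2 / 2))"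
        by (simp only: exp_add)
      also have "\<dots> \<le> exp (- 0.15 * d)"
        using l2a d1 by (simp add: field_simps)
      also have "- 0.15 * d = - 0.15 * \<eta> * r / L" using dd by (simp add: mult.assoc times_divide_eq_right)
      finally show ?thesis .
    qed
    have i3: "exp (- \<tau>0\<^sup>2 / 2) = exp (- r / L)"
      using d1 \<eta>0 dd2 by (simp add: \<tau>0_def)
    have i4: "2 ^ r * exp (- \<tau>\<^sup>2 / 2) \<le> exp (- 0.3 * r)"
    proof -
      have t: "- \<tau>\<^sup>2 / 2 = - (2 * real r)" by (simp add: \<tau>_def power_mult_distrib)
      have "2 ^ r * exp (- \<tau>\<^sup>2 / 2) = exp (real r * ln 2) * exp (- (2 * real r))"
        by (simp only: pow2 t)
      also have "\<dots> = exp (real r * ln 2 - 2 * r)"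
        by (subst exp_add[symmetric]) simp
      also have "\<dots> \<le> exp (- 0.3 * r)"
      proof -
        have "real r * ln 2 \<le> real r * 0.7" using l2a r0 by (intro mult_left_mono) auto
        then show ?thesis by simp
      qed
      finally show ?thesis .
    qed
    have i2: "2 ^ r * (exp (d / 2) * \<kappa> ^ CARD('d)) \<le> exp (- 0.3 * \<epsilon>' * r)"
    proof -
      have lk: "ln \<kappa> = (1 + \<epsilon>') / \<eta> * ln (exp 1 * \<delta>)"
        using e\<delta> by (simp add: \<kappa>_def ln_powr)
      have le: "ln (exp 1 * \<delta>) = - (L * ln 2)"
        using e\<delta> by (simp add: Lln ln_div)
      have "exp (d * ln \<kappa>) = exp (ln \<kappa>) ^ CARD('d)"
        unfolding d_def by (rule exp_of_nat_mult)
      then have "\<kappa> ^ CARD('d) = exp (d * ln \<kappa>)"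
        using \<kappa>0 by simp
      also have "d * ln \<kappa> = - ((1 + \<epsilon>') * real r * ln 2)"
      proof -
        have "d * ln \<kappa> = - ((1 + \<epsilon>') * ln 2 * (d * L) / \<eta>)"
          unfolding lk le by (simp add: algebra_simps)
        also have "\<dots> = - ((1 + \<epsilon>') * ln 2 * (\<eta> * real r) / \<eta>)" by (simp only: dL)
        also have "\<dots> = - ((1 + \<epsilon>') * real r * ln 2)" using \<eta>0 by (simp add: field_simps)
        finally show ?thesis .
      qed
      finally have k: "\<kappa> ^ CARD('d) = exp (- ((1 + \<epsilon>') * real r * ln 2))" .
      have "2 ^ r * (exp (d / 2) * \<kappa> ^ CARD('d)) = exp (real r * ln 2 + (d / 2 + - ((1 + \<epsilon>') * real r * ln 2)))"
        by (simp only: k pow2 exp_add exp_minus)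
      also have "real r * ln 2 + (d / 2 + - ((1 + \<epsilon>') * real r * ln 2)) = d / 2 - \<epsilon>' * r * ln 2"
        by (simp add: algebra_simps)
      finally have eqk: "2 ^ r * (exp (d / 2) * \<kappa> ^ CARD('d)) = exp (d / 2 - \<epsilon>' * r * ln 2)" .
      have "2 ^ r * (exp (d / 2) * \<kappa> ^ CARD('d)) = exp (d / 2 - \<epsilon>' * r * ln 2)" by (rule eqk)
      also have "\<dots> \<le> exp (- 0.3 * \<epsilon>' * r)"
      proof -
        have "d = \<eta> / ln (1 / (exp 1 * \<delta>)) * (real r * ln 2)"
          using dL L0 lnpos unfolding Lln by (simp add: field_simps)
        also have "\<dots> \<le> \<epsilon>' * (real r * ln 2)"
          using assms(9) r0 by (intro mult_right_mono) auto
        finally have "d \<le> \<epsilon>' * (real r * ln 2)" .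
        moreover have "\<epsilon>' * real r * 0.6 \<le> \<epsilon>' * real r * ln 2"
          using assms(8) r0 l2b by (intro mult_left_mono) auto
        ultimately have "d / 2 - \<epsilon>' * r * ln 2 \<le> - 0.3 * \<epsilon>' * r"
          by (simp add: algebra_simps)
        then show ?thesis by simp
      qed
      finally show ?thesis .
    qed
    have pos: "exp (- 0.15 * \<eta> * r / L) > 0" by simp
    have dist: "(2::real) ^ r * (exp (d / 2) * \<kappa> ^ CARD('d) + exp (- \<tau>\<^sup>2 / 2))
       = 2 ^ r * (exp (d / 2) * \<kappa> ^ CARD('d)) + 2 ^ r * exp (- \<tau>\<^sup>2 / 2)"
      by (rule distrib_left)
    show ?thesis using i1 i2 i3 i4 pos dist by linarith
  qed
  ultimately have fin: "measure M Good > 1 - 2 * exp (- 0.15 * \<eta> * r / L) - exp (- r / L) - exp (- 0.3 * r) - exp (- 0.3 * \<epsilon>' * r)"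
    using pU by linarith
  show ?thesis unfolding Let_def
    using fin unfolding Good_def C_def bnd_def L_def .
qed

end
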